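(* For all $s,t\in\{1,2,3,\dots\}\cup\{\infty\}$, $\mathcal F(s,t)=\{\pi^{-1}:\pi\in\mathcal F(t,s)\}$.
   Context: Forkstack sorting with capacities $s,t\in\{1,2,3,\dots\}\cup\{\infty\}$: a permutation $\pi=\pi_1\cdots\pi_n$ of $\{1,\dots,n\}$ is placed on an input stack with $\pi_1$ on top; a working stack and an output stack are initially empty. A move either (i) removes the top $k$ elements of the input stack ($1\le k\le s$) and places them as a block, relative order unchanged, on top of the working stack, or (ii) removes the top $l$ elements of the working stack ($1\le l\le t$) and places them as a block, relative order unchanged, on top of the output stack. $\pi$ is sortable if some sequence of moves ends with input and working stacks empty and the output stack reading $1,2,\dots,n$ from top to bottom. $\mathcal F(s,t)$ is the set of all sortable permutations (of all lengths); $\pi^{-1}$ denotes the inverse permutation. *)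

theory Defs
  imports Main "HOL-Library.Extended_Nat"
begin

definition is_perm :: "nat list \<Rightarrow> bool" where
  "is_perm p \<longleftrightarrow> distinct p \<and> set p = {1..length p}"

(* Inverse permutation: entry at position v (1-based) is the 1-based position of v in p. *)
definition perm_inv :: "nat list \<Rightarrow> nat list" where
  "perm_inv p = map (\<lambda>v. (LEAST i. i < length p \<and> p ! i = v) + 1) [1..<length p + 1]"

(* Configuration (input, working, output); heads of lists are tops of stacks. *)
type_synonym config = "nat list \<times> nat list \<times> nat list"

inductive fs_move :: "enat \<Rightarrow> enat \<Rightarrow> config \<Rightarrow> config \<Rightarrow> bool" for s t where
  push: "\<lbrakk>1 \<le> k; enat k \<le> s; k \<le> length inp\<rbrakk> \<Longrightarrow>
     fs_move s t (inp, w, out) (drop k inp, take k inp @ w, out)"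
| pop: "\<lbrakk>1 \<le> l; enat l \<le> t; l \<le> length w\<rbrakk> \<Longrightarrow>
     fs_move s t (inp, w, out) (inp, drop l w, take l w @ out)"

definition fs_sortable :: "enat \<Rightarrow> enat \<Rightarrow> nat list \<Rightarrow> bool" where
  "fs_sortable s t p \<longleftrightarrow> (fs_move s t)\<^sup>*\<^sup>* (p, [], []) ([], [], [1..<length p + 1])"

definition F :: "enat \<Rightarrow> enat \<Rightarrow> nat list set" where
  "F s t = {p. is_perm p \<and> fs_sortable s t p}"

end

theory Submission
  imports Defs
begin

declare upt_Suc[simp del]

definition mir :: "config \<Rightarrow> config" where
  "mir c = (case c of (a, w, b) \<Rightarrow> (b, w, a))"

definition mapc :: "(nat \<Rightarrow> nat) \<Rightarrow> config \<Rightarrow> config" where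
  "mapc g c = (case c of (a, w, b) \<Rightarrow> (map g a, map g w, map g b))"

lemma move_mir: "fs_move s t c c' \<Longrightarrow> fs_move t s (mir c') (mir c)"
proof (induction rule: fs_move.induct)
  case (push k inp w out)
  have "fs_move t s (out, take k inp @ w, drop k inp)
      (out, drop k (take k inp @ w), take k (take k inp @ w) @ drop k inp)"
    by (rule fs_move.pop) (use push in auto)
  then show ?case using push by (simp add: mir_def min_def)
next
  case (pop l w inp out)
  have "fs_move t s (take l w @ out, drop l w, inp)
      (drop l (take l w @ out), take l (take l w @ out) @ drop l w, inp)"
    by (rule fs_move.push) (use pop in auto)
  then show ?case using pop by (simp add: mir_def min_def)
qed

lemma star_mir: "(fs_move s t)\<^sup>*\<^sup>* c c' \<Longrightarrow> (fs_move t s)\<^sup>*\<^sup>* (mir c') (mir c)"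
proof (induction rule: rtranclp_induct)
  case base then show ?case by simp
next
  case (step y z)
  then show ?case using move_mir[OF step(2)]
    by (meson converse_rtranclp_into_rtranclp)
qed

lemma move_map: "fs_move s t c c' \<Longrightarrow> fs_move s t (mapc g c) (mapc g c')"
proof (induction rule: fs_move.induct)
  case (push k inp w out)
  have "fs_move s t (map g inp, map g w, map g out)
      (drop k (map g inp), take k (map g inp) @ map g w, map g out)"
    by (rule fs_move.push) (use push in auto)
  then show ?case by (simp add: mapc_def drop_map take_map)
next
  case (pop l w inp out)
  have "fs_move s t (map g inp, map g w, map g out)
      (map g inp, drop l (map g w), take l (map g w) @ map g out)"
    by (rule fs_move.pop) (use pop in auto)
  then show ?case by (simp add: mapc_def drop_map take_map)
qed

lemma star_map: "(fs_move s t)\<^sup>*\<^sup>* c c' \<Longrightarrow> (fs_move s t)\<^sup>*\<^sup>* (mapc g c) (mapc g c')"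
proof (induction rule: rtranclp_induct)
  case base then show ?case by simp
next
  case (step y z)
  then show ?case using move_map[OF step(2)]
    by (meson rtranclp.rtrancl_into_rtrancl)
qed

lemma least_pos:
  assumes "distinct xs" "i < length xs"
  shows "(LEAST k. k < length xs \<and> xs ! k = xs ! i) = i"
  by (rule Least_equality) (use assms nth_eq_iff_index_eq in auto)

lemma map_g_p:
  assumes "distinct p"
  shows "map (\<lambda>v. (LEAST i. i < length p \<and> p ! i = v) + 1) p = [1..<length p + 1]"
  by (rule nth_equalityI) (auto simp: least_pos[OF assms] simp del: upt_Suc)

lemma perm_inv_len: "length (perm_inv p) = length p"
  by (simp add: perm_inv_def)

lemma perm_inv_at:
  assumes "is_perm p" "i < length p"
  shows "perm_inv p ! (p ! i - 1) = i + 1"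
proof -
  have pi: "p ! i \<in> {1..length p}" using assms unfolding is_perm_def
    by (metis nth_mem)
  then have "p ! i - 1 < length p" by auto
  then have "perm_inv p ! (p ! i - 1) = (LEAST k. k < length p \<and> p ! k = p ! i) + 1"
    unfolding perm_inv_def using pi by auto
  then show ?thesis using least_pos[of p i] assms unfolding is_perm_def by simp
qed

lemma perm_inv_perm:
  assumes "is_perm p"
  shows "is_perm (perm_inv p)"
proof -
  let ?n = "length p"
  let ?q = "perm_inv p"
  have sq: "set ?q = {1..?n}"
  proof
    show "{1..?n} \<subseteq> set ?q"
    proof
      fix x assume x: "x \<in> {1..?n}"
      then have "x - 1 < ?n" by auto
      moreover have "?q ! (p ! (x - 1) - 1) = x"
        using perm_inv_at[OF assms \<open>x - 1 < ?n\<close>] x by auto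
      moreover have "p ! (x - 1) - 1 < ?n" using assms \<open>x - 1 < ?n\<close> unfolding is_perm_def
        by (metis atLeastAtMost_iff diff_less less_le_trans less_numeral_extra(1) nth_mem
            order_le_less_trans le_imp_less_Suc Suc_le_eq zero_less_one le_less_trans)
      ultimately show "x \<in> set ?q" by (metis nth_mem perm_inv_len)
    qed
  next
    show "set ?q \<subseteq> {1..?n}"
    proof
      fix y assume "y \<in> set ?q"
      then obtain v where v: "v \<in> {1..?n}" and y: "y = (LEAST i. i < ?n \<and> p ! i = v) + 1"
        unfolding perm_inv_def by (auto simp del: Suc_eq_plus1 simp add: less_Suc_eq_le)
      have "\<exists>i. i < ?n \<and> p ! i = v" using v assms unfolding is_perm_def
        by (metis in_set_conv_nth)
      then have "(LEAST i. i < ?n \<and> p ! i = v) < ?n" by (metis (mono_tags, lifting) LeastI)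
      then show "y \<in> {1..?n}" using y by auto
    qed
  qed
  have "card (set ?q) = length ?q" using sq by (simp add: perm_inv_len)
  then have "distinct ?q" by (simp add: card_distinct)
  then show ?thesis using sq unfolding is_perm_def by (simp add: perm_inv_len)
qed

lemma perm_inv_inv:
  assumes "is_perm p"
  shows "perm_inv (perm_inv p) = p"
proof (rule nth_equalityI)
  show "length (perm_inv (perm_inv p)) = length p" by (simp add: perm_inv_len)
next
  fix j assume j: "j < length (perm_inv (perm_inv p))"
  then have j': "j < length p" by (simp add: perm_inv_len)
  let ?q = "perm_inv p"
  have qp: "is_perm ?q" by (rule perm_inv_perm[OF assms])
  have pj: "p ! j \<in> {1..length p}" using assms j' unfolding is_perm_def by (metis nth_mem)
  have k: "p ! j - 1 < length ?q" using pj by (auto simp: perm_inv_len)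
  have qk: "?q ! (p ! j - 1) = j + 1" by (rule perm_inv_at[OF assms j'])
  have "perm_inv ?q ! j = (LEAST k. k < length ?q \<and> ?q ! k = j + 1) + 1"
    unfolding perm_inv_def using j' by (auto simp: perm_inv_len)
  also have "(LEAST k. k < length ?q \<and> ?q ! k = j + 1) = p ! j - 1"
    using least_pos[of ?q "p ! j - 1"] qp k qk unfolding is_perm_def by simp
  finally show "perm_inv ?q ! j = p ! j" using pj by simp
qed

lemma key:
  assumes "p \<in> F s t"
  shows "perm_inv p \<in> F t s"
proof -
  have pp: "is_perm p" and so: "(fs_move s t)\<^sup>*\<^sup>* (p, [], []) ([], [], [1..<length p + 1])"
    using assms unfolding F_def fs_sortable_def by auto
  define g where "g = (\<lambda>v. (LEAST i. i < length p \<and> p ! i = v) + 1)"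
  have "(fs_move t s)\<^sup>*\<^sup>* ([1..<length p + 1], [], []) ([], [], p)"
    using star_mir[OF so] by (simp add: mir_def)
  from star_map[OF this, of g]
  have "(fs_move t s)\<^sup>*\<^sup>* (map g [1..<length p + 1], [], []) ([], [], map g p)"
    by (simp add: mapc_def)
  moreover have "map g [1..<length p + 1] = perm_inv p" unfolding g_def perm_inv_def by (simp del: upt_Suc)
  moreover have "map g p = [1..<length (perm_inv p) + 1]"
    using map_g_p[of p] pp unfolding g_def is_perm_def by (simp add: perm_inv_len)
  ultimately show ?thesis using perm_inv_perm[OF pp] unfolding F_def fs_sortable_def by simp
qed

theorem mainTheorem3:
  fixes s t :: enat
  assumes "s \<ge> 1" and "t \<ge> 1"
  shows "F s t = perm_inv ` F t s"
proof
  show "F s t \<subseteq> perm_inv ` F t s"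
  proof
    fix p assume p: "p \<in> F s t"
    then have "p = perm_inv (perm_inv p)" using perm_inv_inv unfolding F_def by auto
    then show "p \<in> perm_inv ` F t s" using key[OF p] by blast
  qed
next
  show "perm_inv ` F t s \<subseteq> F s t" using key by blast
qed

end
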